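(* Let $F$ be a minimally unsatisfiable clause-set with no 1-singular variables. Then the sets of variables of maximal singular tuples for $F$ are exactly the minimal transversals of the singularity hypergraph $\mathrm{shyp}(F)$ (the inclusion-minimal sets of vertices meeting every hyperedge), and the maximal singular tuples for $F$ are exactly the arbitrary linear orderings of these minimal transversals.
   Context: Literals are variables $v$ and complements $\overline{v}$; a clause is a finite set of literals with no complementary pair; a clause-set is a finite set of clauses; $\mathrm{var}(F)$ is the set of variables of $F$ and $\mathrm{var}(L)$ the set of variables underlying a literal set $L$; $\mathrm{ldeg}_F(x)$ is the number of clauses of $F$ containing literal $x$. $\mathrm{DP}_v(F) := \{C \in F : v \notin \mathrm{var}(C)\} \cup \{(C \cup D)\setminus\{v,\overline{v}\} : C, D \in F,\ C \cap \overline{D} = \{v\}\}$; $\mathrm{DP}_{v_1,\dots,v_k}(F)$ applies these in order. A variable $v$ is singular for $F$ if $\min(\mathrm{ldeg}_F(v),\mathrm{ldeg}_F(\overline{v}))=1$; it is 1-singular if $\mathrm{ldeg}_F(v)=\mathrm{ldeg}_F(\overline{v})=1$; $F$ is nonsingular if it has no singular variables. For minimally unsatisfiable $F$, a tuple $(v_1,\dots,v_n)$ is a singular tuple for $F$ if each $v_i$ is singular for $\mathrm{DP}_{v_1,\dots,v_{i-1}}(F)$, and it is maximal if $\mathrm{DP}_{v_1,\dots,v_n}(F)$ is nonsingular. When $F$ has no 1-singular variables, each singular variable $v$ has a unique singular literal $x_v$ (the literal of $v$ with $\mathrm{ldeg}_F(x_v)=1$); let $L$ be the set of these. The singularity hypergraph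 $\mathrm{shyp}(F)$ has vertex set $\mathrm{var}(F)$ and hyperedges $\mathrm{var}(C\cap L)$ for all $C\in F$ with $C\cap L\neq\emptyset$. *)

theory Defs
  imports Main
begin

datatype 'a lit = Pos 'a | Neg 'a

fun lvar :: "'a lit \<Rightarrow> 'a" where
  "lvar (Pos v) = v" | "lvar (Neg v) = v"

fun comp :: "'a lit \<Rightarrow> 'a lit" where
  "comp (Pos v) = Neg v" | "comp (Neg v) = Pos v"

definition clause :: "'a lit set \<Rightarrow> bool" where
  "clause C \<longleftrightarrow> finite C \<and> (\<forall>x\<in>C. comp x \<notin> C)"

definition clause_set :: "'a lit set set \<Rightarrow> bool" where
  "clause_set F \<longleftrightarrow> finite F \<and> (\<forall>C\<in>F. clause C)"

definition var_cl :: "'a lit set \<Rightarrow> 'a set" where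
  "var_cl C = lvar ` C"

definition var_cs :: "'a lit set set \<Rightarrow> 'a set" where
  "var_cs F = (\<Union>C\<in>F. var_cl C)"

fun lit_val :: "('a \<Rightarrow> bool) \<Rightarrow> 'a lit \<Rightarrow> bool" where
  "lit_val \<phi> (Pos v) = \<phi> v" | "lit_val \<phi> (Neg v) = (\<not> \<phi> v)"

definition satisfiable :: "'a lit set set \<Rightarrow> bool" where
  "satisfiable F \<longleftrightarrow> (\<exists>\<phi>. \<forall>C\<in>F. \<exists>x\<in>C. lit_val \<phi> x)"

definition min_unsat :: "'a lit set set \<Rightarrow> bool" where
  "min_unsat F \<longleftrightarrow> clause_set F \<and> \<not> satisfiable F \<and> (\<forall>G. G \<subset> F \<longrightarrow> satisfiable G)"

definition ldeg :: "'a lit set set \<Rightarrow> 'a lit \<Rightarrow> nat" where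
  "ldeg F x = card {C \<in> F. x \<in> C}"

definition DP :: "'a \<Rightarrow> 'a lit set set \<Rightarrow> 'a lit set set" where
  "DP v F = {C \<in> F. v \<notin> var_cl C} \<union>
     {(C \<union> D) - {Pos v, Neg v} | C D. C \<in> F \<and> D \<in> F \<and> C \<inter> comp ` D = {Pos v}}"

fun DP_seq :: "'a list \<Rightarrow> 'a lit set set \<Rightarrow> 'a lit set set" where
  "DP_seq [] F = F"
| "DP_seq (v # vs) F = DP_seq vs (DP v F)"

definition singular :: "'a lit set set \<Rightarrow> 'a \<Rightarrow> bool" where
  "singular F v \<longleftrightarrow> min (ldeg F (Pos v)) (ldeg F (Neg v)) = 1"

definition one_singular :: "'a lit set set \<Rightarrow> 'a \<Rightarrow> bool" where
  "one_singular F v \<longleftrightarrow> ldeg F (Pos v) = 1 \<and> ldeg F (Neg v) = 1"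

definition nonsingular :: "'a lit set set \<Rightarrow> bool" where
  "nonsingular F \<longleftrightarrow> (\<forall>v. \<not> singular F v)"

definition singular_tuple :: "'a lit set set \<Rightarrow> 'a list \<Rightarrow> bool" where
  "singular_tuple F vs \<longleftrightarrow> (\<forall>i < length vs. singular (DP_seq (take i vs) F) (vs ! i))"

definition max_singular_tuple :: "'a lit set set \<Rightarrow> 'a list \<Rightarrow> bool" where
  "max_singular_tuple F vs \<longleftrightarrow> singular_tuple F vs \<and> nonsingular (DP_seq vs F)"

definition sing_lits :: "'a lit set set \<Rightarrow> 'a lit set" where
  "sing_lits F = {x. singular F (lvar x) \<and> ldeg F x = 1}"

definition shyp :: "'a lit set set \<Rightarrow> 'a set \<times> 'a set set" where
  "shyp F = (var_cs F,
     {var_cl (C \<inter> sing_lits F) | C. C \<in> F \<and> C \<inter> sing_lits F \<noteq> {}})"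

definition transversal :: "'a set \<times> 'a set set \<Rightarrow> 'a set \<Rightarrow> bool" where
  "transversal H T \<longleftrightarrow> T \<subseteq> fst H \<and> (\<forall>E\<in>snd H. T \<inter> E \<noteq> {})"

definition min_transversals :: "'a set \<times> 'a set set \<Rightarrow> 'a set set" where
  "min_transversals H = {T. transversal H T \<and> (\<forall>T'. T' \<subset> T \<longrightarrow> \<not> transversal H T')}"

end

theory Submission
  imports Defs
begin

lemma comp_comp[simp]: "comp (comp x) = x" by (cases x) auto
lemma lvar_comp[simp]: "lvar (comp x) = lvar x" by (cases x) auto
lemma comp_neq[simp]: "comp x \<noteq> x" by (cases x) auto
lemma comp_neq2[simp]: "x \<noteq> comp x" by (cases x) auto
lemma lit_val_comp[simp]: "lit_val \<phi> (comp x) = (\<not> lit_val \<phi> x)" by (cases x) auto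
lemma comp_inj[simp]: "comp a = comp b \<longleftrightarrow> a = b" by (metis comp_comp)
lemma lvar_eq_cases: "lvar y = lvar x \<Longrightarrow> y = x \<or> y = comp x"
  by (cases x; cases y) auto
lemma lit_val_upd_other: "lvar z \<noteq> lvar x \<Longrightarrow> lit_val (\<phi>(lvar x := b)) z = lit_val \<phi> z"
  by (cases z; cases x) auto
lemma lit_val_upd_self: "lit_val (\<phi>(lvar x := lit_val (\<lambda>_. b) x)) x = b"
  by (cases x) auto
lemma mem_comp_img: "w \<in> comp ` A \<longleftrightarrow> comp w \<in> A"
  by (metis comp_comp image_iff)

lemma singular_iff: "singular F (lvar y) \<longleftrightarrow> min (ldeg F y) (ldeg F (comp y)) = 1"
  by (cases y) (auto simp: singular_def min.commute)
lemma one_singular_iff: "one_singular F (lvar y) \<longleftrightarrow> ldeg F y = 1 \<and> ldeg F (comp y) = 1"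
  by (cases y) (auto simp: one_singular_def)
lemma sing_lits_iff: "y \<in> sing_lits F \<longleftrightarrow> ldeg F y = 1 \<and> ldeg F (comp y) \<ge> 1"
  unfolding sing_lits_def using singular_iff[of F y] by (auto simp: min_def split: if_splits)

lemma singular_iff_L: "singular F w \<longleftrightarrow> (\<exists>y\<in>sing_lits F. lvar y = w)"
proof
  assume "singular F w"
  hence m: "min (ldeg F (Pos w)) (ldeg F (Neg w)) = 1" by (simp add: singular_def)
  show "\<exists>y\<in>sing_lits F. lvar y = w"
  proof (cases "ldeg F (Pos w) = 1")
    case True
    with m have "Pos w \<in> sing_lits F" by (simp add: sing_lits_iff min_def split: if_splits)
    thus ?thesis by force
  next
    case False
    with m have "Neg w \<in> sing_lits F" by (simp add: sing_lits_iff min_def split: if_splits)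
    thus ?thesis by force
  qed
next
  assume "\<exists>y\<in>sing_lits F. lvar y = w"
  thus "singular F w" by (auto simp: sing_lits_def)
qed

lemma L_unique:
  assumes "\<forall>w. \<not> one_singular F w" "y1 \<in> sing_lits F" "y2 \<in> sing_lits F" "lvar y1 = lvar y2"
  shows "y1 = y2"
proof (rule ccontr)
  assume "y1 \<noteq> y2"
  with assms(4) have "y2 = comp y1" using lvar_eq_cases by metis
  with assms(2,3) have "one_singular F (lvar y1)" by (simp add: one_singular_iff sing_lits_iff)
  with assms(1) show False by blast
qed

lemma ldeg1_clause:
  assumes "ldeg F y = 1" obtains C where "{E\<in>F. y\<in>E} = {C}"
  using assms unfolding ldeg_def by (meson card_1_singletonE)

lemma L_clause: assumes "y \<in> sing_lits F" obtains E0 where "{E\<in>F. y\<in>E} = {E0}"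
proof -
  have "ldeg F y = 1" using assms by (simp add: sing_lits_iff)
  thus ?thesis using ldeg1_clause that by blast
qed

lemma L_in: "y \<in> sing_lits F \<Longrightarrow> \<exists>E\<in>F. y \<in> E"
  by (metis (no_types, lifting) L_clause insertI1 mem_Collect_eq)

lemma L_uniq: "y \<in> sing_lits F \<Longrightarrow> E1 \<in> F \<Longrightarrow> E2 \<in> F \<Longrightarrow> y \<in> E1 \<Longrightarrow> y \<in> E2 \<Longrightarrow> E1 = E2"
proof -
  assume a: "y \<in> sing_lits F" "E1 \<in> F" "E2 \<in> F" "y \<in> E1" "y \<in> E2"
  obtain E0 where e: "{E\<in>F. y\<in>E} = {E0}" using L_clause[OF a(1)] by blast
  have "E1 \<in> {E\<in>F. y\<in>E}" "E2 \<in> {E\<in>F. y\<in>E}" using a by auto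
  thus "E1 = E2" using e by auto
qed

lemma ldeg_pos: "finite F \<Longrightarrow> E \<in> F \<Longrightarrow> z \<in> E \<Longrightarrow> ldeg F z \<ge> 1"
proof -
  assume a: "finite F" "E \<in> F" "z \<in> E"
  have "E \<in> {C\<in>F. z\<in>C}" "finite {C\<in>F. z\<in>C}" using a by auto
  hence "card {C\<in>F. z\<in>C} > 0" using card_gt_0_iff by blast
  thus ?thesis by (simp add: ldeg_def)
qed

definition tog :: "'a lit set set \<Rightarrow> 'a lit \<Rightarrow> 'a lit \<Rightarrow> bool" where
  "tog F a b \<longleftrightarrow> (\<exists>E\<in>F. a \<in> E \<and> b \<in> E)"
definition indep :: "'a lit set set \<Rightarrow> 'a set \<Rightarrow> bool" where
  "indep F T \<longleftrightarrow> T \<subseteq> {w. singular F w} \<and> (\<forall>y1\<in>sing_lits F. \<forall>y2\<in>sing_lits F.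
      lvar y1 \<in> T \<longrightarrow> lvar y2 \<in> T \<longrightarrow> tog F y1 y2 \<longrightarrow> y1 = y2)"
definition cover :: "'a lit set set \<Rightarrow> 'a set \<Rightarrow> bool" where
  "cover F T \<longleftrightarrow> (\<forall>y\<in>sing_lits F. \<exists>y'\<in>sing_lits F. lvar y' \<in> T \<and> tog F y y')"
definition sat_cl :: "('a \<Rightarrow> bool) \<Rightarrow> 'a lit set \<Rightarrow> bool" where
  "sat_cl \<phi> E \<longleftrightarrow> (\<exists>z\<in>E. lit_val \<phi> z)"

lemma clash_sym: "A \<inter> comp ` B = {z} \<Longrightarrow> B \<inter> comp ` A = {comp z}"
proof -
  have "B \<inter> comp ` A = comp ` (A \<inter> comp ` B)"
    by (auto simp: mem_comp_img)
  thus "A \<inter> comp ` B = {z} \<Longrightarrow> B \<inter> comp ` A = {comp z}" by simp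
qed

lemma res_sym:
  "{(A \<union> B) - S | A B. A \<in> F \<and> B \<in> F \<and> A \<inter> comp ` B = {z}}
   = {(A \<union> B) - S | A B. A \<in> F \<and> B \<in> F \<and> A \<inter> comp ` B = {comp z}}"
proof (rule set_eqI, rule iffI)
  fix Z assume "Z \<in> {(A \<union> B) - S | A B. A \<in> F \<and> B \<in> F \<and> A \<inter> comp ` B = {z}}"
  then obtain A B where AB: "Z = (A \<union> B) - S" "A \<in> F" "B \<in> F" "A \<inter> comp ` B = {z}" by blast
  have "Z = (B \<union> A) - S" using AB(1) by (simp add: Un_commute)
  moreover have "B \<inter> comp ` A = {comp z}" using clash_sym[OF AB(4)] .
  ultimately show "Z \<in> {(A \<union> B) - S | A B. A \<in> F \<and> B \<in> F \<and> A \<inter> comp ` B = {comp z}}"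
    using AB(2,3) by blast
next
  fix Z assume "Z \<in> {(A \<union> B) - S | A B. A \<in> F \<and> B \<in> F \<and> A \<inter> comp ` B = {comp z}}"
  then obtain A B where AB: "Z = (A \<union> B) - S" "A \<in> F" "B \<in> F" "A \<inter> comp ` B = {comp z}" by blast
  have "Z = (B \<union> A) - S" using AB(1) by (simp add: Un_commute)
  moreover have "B \<inter> comp ` A = {z}" using clash_sym[OF AB(4)] by simp
  ultimately show "Z \<in> {(A \<union> B) - S | A B. A \<in> F \<and> B \<in> F \<and> A \<inter> comp ` B = {z}}"
    using AB(2,3) by blast
qed

locale dpstep =
  fixes F :: "'a lit set set" and x :: "'a lit" and C :: "'a lit set"
  assumes mu: "min_unsat F"
    and no1: "\<forall>w. \<not> one_singular F w"
    and xL: "x \<in> sing_lits F"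
    and xC: "{E\<in>F. x\<in>E} = {C}"
begin

abbreviation "v \<equiv> lvar x"
definition "Ds = {D\<in>F. comp x \<in> D}"
definition "R D = (C \<union> D) - {x, comp x}"
definition "F0 = {E\<in>F. v \<notin> var_cl E}"
definition "rho E = (if E \<in> Ds then R E else E)"

lemma finF: "finite F" using mu by (simp add: min_unsat_def clause_set_def)
lemma clF: "E \<in> F \<Longrightarrow> clause E" using mu by (simp add: min_unsat_def clause_set_def)
lemma cons: "E \<in> F \<Longrightarrow> z \<in> E \<Longrightarrow> comp z \<notin> E" using clF clause_def by blast
lemma CF: "C \<in> F" using xC by auto
lemma xinC: "x \<in> C" using xC by auto
lemma x_uniq: "E \<in> F \<Longrightarrow> x \<in> E \<Longrightarrow> E = C" using xC by auto
lemma cxC: "comp x \<notin> C" using cons[OF CF xinC] .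
lemma unsatF: "\<not> satisfiable F" using mu by (simp add: min_unsat_def)
lemma notv: "z \<noteq> x \<Longrightarrow> z \<noteq> comp x \<Longrightarrow> lvar z \<noteq> v" using lvar_eq_cases by metis

lemma crit: "D \<in> F \<Longrightarrow> \<exists>\<phi>. (\<forall>E\<in>F. E \<noteq> D \<longrightarrow> sat_cl \<phi> E) \<and> (\<forall>z\<in>D. \<not> lit_val \<phi> z)"
proof -
  assume D: "D \<in> F"
  have "F - {D} \<subset> F" using D by auto
  hence "satisfiable (F - {D})" using mu by (simp add: min_unsat_def)
  then obtain \<phi> where p: "\<forall>E\<in>F - {D}. \<exists>z\<in>E. lit_val \<phi> z" by (auto simp: satisfiable_def)
  have "\<forall>z\<in>D. \<not> lit_val \<phi> z"
  proof (rule ccontr)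
    assume "\<not> (\<forall>z\<in>D. \<not> lit_val \<phi> z)"
    hence "\<forall>E\<in>F. \<exists>z\<in>E. lit_val \<phi> z" using p by blast
    thus False using unsatF unfolding satisfiable_def by blast
  qed
  thus ?thesis using p by (auto simp: sat_cl_def)
qed

lemma finDs: "finite Ds" using finF by (simp add: Ds_def)
lemma degDs: "card Ds \<ge> 2"
proof -
  have a: "ldeg F x = 1" "ldeg F (comp x) \<ge> 1" using xL by (auto simp: sing_lits_iff)
  have "ldeg F (comp x) \<noteq> 1" using no1 a(1) one_singular_iff[of F x] by auto
  with a have "ldeg F (comp x) \<ge> 2" by simp
  thus ?thesis by (simp add: ldeg_def Ds_def)
qed

lemma flip_sat:
  assumes "\<forall>E\<in>F. E \<noteq> C \<longrightarrow> comp x \<notin> E \<longrightarrow> sat_cl \<phi> E"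
    and "z \<in> C" "z \<noteq> x" "lit_val \<phi> z"
  shows False
proof -
  define \<psi> where "\<psi> = \<phi>(v := lit_val (\<lambda>_. False) x)"
  have px: "\<not> lit_val \<psi> x" unfolding \<psi>_def using lit_val_upd_self[of \<phi> x False] by simp
  have oth: "\<And>w. lvar w \<noteq> v \<Longrightarrow> lit_val \<psi> w = lit_val \<phi> w" unfolding \<psi>_def by (rule lit_val_upd_other)
  have zv: "lvar z \<noteq> v" using notv assms(2,3) cxC by auto
  have "\<forall>E\<in>F. \<exists>w\<in>E. lit_val \<psi> w"
  proof
    fix E assume E: "E \<in> F"
    show "\<exists>w\<in>E. lit_val \<psi> w"
    proof (cases "comp x \<in> E")
      case True thus ?thesis using px by (metis lit_val_comp)
    next
      case False
      show ?thesis
      proof (cases "E = C")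
        case True thus ?thesis using assms(2,4) oth[OF zv] by auto
      next
        case EC: False
        then obtain w where w: "w \<in> E" "lit_val \<phi> w" using assms(1) E False by (auto simp: sat_cl_def)
        have "w \<noteq> x" using w(1) x_uniq[OF E] EC by blast
        moreover have "w \<noteq> comp x" using w(1) False by blast
        ultimately have "lvar w \<noteq> v" by (rule notv)
        thus ?thesis using w oth by auto
      qed
    qed
  qed
  thus False using unsatF unfolding satisfiable_def by blast
qed

lemma clash: assumes D: "D \<in> Ds" shows "C \<inter> comp ` D = {x}"
proof -
  have DF: "D \<in> F" and cxD: "comp x \<in> D" using D by (auto simp: Ds_def)
  have xin: "x \<in> C \<inter> comp ` D" using xinC cxD by (simp add: mem_comp_img)
  have zx: "z = x" if z: "z \<in> C" "comp z \<in> D" for z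
  proof (rule ccontr)
    assume zx: "z \<noteq> x"
    obtain \<phi> where p: "\<forall>E\<in>F. E \<noteq> D \<longrightarrow> sat_cl \<phi> E" "\<forall>z\<in>D. \<not> lit_val \<phi> z" using crit[OF DF] by blast
    have "\<not> lit_val \<phi> (comp z)" using p(2) z(2) by blast
    hence lz: "lit_val \<phi> z" by simp
    have "\<forall>E\<in>F. E \<noteq> C \<longrightarrow> comp x \<notin> E \<longrightarrow> sat_cl \<phi> E" using p(1) cxD by blast
    from flip_sat[OF this z(1) zx lz] show False .
  qed
  moreover have "C \<inter> comp ` D \<subseteq> {x}"
  proof
    fix z assume "z \<in> C \<inter> comp ` D"
    hence "z \<in> C" "comp z \<in> D" by (auto simp: mem_comp_img)
    thus "z \<in> {x}" using zx by blast
  qed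
  thus ?thesis using xin by blast
qed

lemma R_inj: assumes "D1 \<in> Ds" "D2 \<in> Ds" "R D1 = R D2" shows "D1 = D2"
proof (rule ccontr)
  assume ne: "D1 \<noteq> D2"
  have D1F: "D1 \<in> F" and c1: "comp x \<in> D1" and D2F: "D2 \<in> F" and c2: "comp x \<in> D2"
    using assms by (auto simp: Ds_def)
  obtain \<phi> where p: "\<forall>E\<in>F. E \<noteq> D1 \<longrightarrow> sat_cl \<phi> E" "\<forall>z\<in>D1. \<not> lit_val \<phi> z" using crit[OF D1F] by blast
  obtain w where w: "w \<in> D2" "lit_val \<phi> w" using p(1) D2F ne by (auto simp: sat_cl_def)
  have "w \<noteq> comp x" using w(2) p(2) c1 by auto
  moreover have "w \<noteq> x" using w(1) cons[OF D2F c2] by auto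
  ultimately have "w \<in> R D1" using w(1) assms(3) by (auto simp: R_def)
  moreover have "w \<notin> D1" using w(2) p(2) by auto
  ultimately have "w \<in> C" "w \<noteq> x" by (auto simp: R_def)
  moreover have "\<forall>E\<in>F. E \<noteq> C \<longrightarrow> comp x \<notin> E \<longrightarrow> sat_cl \<phi> E" using p(1) c1 by auto
  ultimately show False using flip_sat[of \<phi> w] w(2) by blast
qed

lemma var_v: "v \<in> var_cl E \<longleftrightarrow> x \<in> E \<or> comp x \<in> E"
  unfolding var_cl_def by (metis image_iff lvar_comp lvar_eq_cases)

lemma F0_alt: "E \<in> F0 \<longleftrightarrow> E \<in> F \<and> x \<notin> E \<and> comp x \<notin> E" by (auto simp: F0_def var_v)

lemma R_F0: assumes "D \<in> Ds" "E \<in> F0" "R D = E" shows False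
proof -
  have DF: "D \<in> F" and c1: "comp x \<in> D" using assms by (auto simp: Ds_def)
  have EF: "E \<in> F" and nx: "x \<notin> E" "comp x \<notin> E" using assms(2) by (auto simp: F0_alt)
  obtain \<phi> where p: "\<forall>E\<in>F. E \<noteq> D \<longrightarrow> sat_cl \<phi> E" "\<forall>z\<in>D. \<not> lit_val \<phi> z" using crit[OF DF] by blast
  have "E \<noteq> D" using c1 nx by auto
  then obtain w where w: "w \<in> E" "lit_val \<phi> w" using p(1) EF by (auto simp: sat_cl_def)
  have "w \<in> R D" using w(1) assms(3) by simp
  moreover have "w \<notin> D" using w(2) p(2) by auto
  ultimately have "w \<in> C" "w \<noteq> x" by (auto simp: R_def)
  moreover have "\<forall>E\<in>F. E \<noteq> C \<longrightarrow> comp x \<notin> E \<longrightarrow> sat_cl \<phi> E" using p(1) c1 by auto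
  ultimately show False using flip_sat[of \<phi> w] w(2) by blast
qed

lemma Fsplit: "F - {C} = F0 \<union> Ds"
proof (rule set_eqI)
  fix E
  show "E \<in> F - {C} \<longleftrightarrow> E \<in> F0 \<union> Ds"
  proof
    assume E: "E \<in> F - {C}"
    hence "x \<notin> E" using x_uniq by blast
    thus "E \<in> F0 \<union> Ds" using E by (auto simp: F0_alt Ds_def)
  next
    assume "E \<in> F0 \<union> Ds"
    thus "E \<in> F - {C}" using xinC cxC by (auto simp: F0_alt Ds_def)
  qed
qed

lemma F0_Ds: "F0 \<inter> Ds = {}" by (auto simp: F0_alt Ds_def)

lemma DP_eq: "DP v F = F0 \<union> R ` Ds"
proof -
  have PN: "{Pos v, Neg v} = {x, comp x}" by (cases x) auto
  have s1: "{(A \<union> B) - {Pos v, Neg v} | A B. A \<in> F \<and> B \<in> F \<and> A \<inter> comp ` B = {Pos v}}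
      = {(A \<union> B) - {x, comp x} | A B. A \<in> F \<and> B \<in> F \<and> A \<inter> comp ` B = {x}}"
  proof (cases x)
    case (Pos u) thus ?thesis by simp
  next
    case (Neg u)
    thus ?thesis using res_sym[of "{x, comp x}" F x] PN by simp
  qed
  have s2: "{(A \<union> B) - {x, comp x} | A B. A \<in> F \<and> B \<in> F \<and> A \<inter> comp ` B = {x}} = R ` Ds"
  proof (rule set_eqI, rule iffI)
    fix Z assume "Z \<in> {(A \<union> B) - {x, comp x} | A B. A \<in> F \<and> B \<in> F \<and> A \<inter> comp ` B = {x}}"
    then obtain A B where AB: "Z = (A \<union> B) - {x, comp x}" "A \<in> F" "B \<in> F" "A \<inter> comp ` B = {x}" by blast
    have "x \<in> A \<inter> comp ` B" using AB(4) by simp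
    hence "x \<in> A" "comp x \<in> B" by (auto simp: mem_comp_img)
    hence "A = C" "B \<in> Ds" using x_uniq AB(2,3) by (auto simp: Ds_def)
    thus "Z \<in> R ` Ds" using AB(1) by (auto simp: R_def)
  next
    fix Z assume "Z \<in> R ` Ds"
    then obtain D where D: "D \<in> Ds" "Z = R D" by blast
    thus "Z \<in> {(A \<union> B) - {x, comp x} | A B. A \<in> F \<and> B \<in> F \<and> A \<inter> comp ` B = {x}}"
      using clash[OF D(1)] CF unfolding R_def Ds_def by blast
  qed
  show ?thesis unfolding DP_def using s1 s2 F0_def by simp
qed

lemma G_eq: "DP v F = rho ` (F - {C})"
proof -
  have "rho ` (F - {C}) = rho ` F0 \<union> rho ` Ds" using Fsplit by auto
  also have "rho ` F0 = F0" using F0_Ds by (force simp: rho_def)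
  also have "rho ` Ds = R ` Ds" by (auto simp: rho_def)
  finally show ?thesis using DP_eq by simp
qed

lemma rho_inj: "inj_on rho (F - {C})"
proof (rule inj_onI)
  fix A B assume A: "A \<in> F - {C}" and B: "B \<in> F - {C}" and e: "rho A = rho B"
  show "A = B"
  proof (cases "A \<in> Ds"; cases "B \<in> Ds")
    assume "A \<in> Ds" "B \<in> Ds" thus ?thesis using e R_inj by (simp add: rho_def)
  next
    assume "A \<in> Ds" "B \<notin> Ds"
    hence "B \<in> F0" using B Fsplit by auto
    moreover have "R A = B" using e \<open>A \<in> Ds\<close> \<open>B \<notin> Ds\<close> by (simp add: rho_def)
    ultimately show ?thesis using R_F0 \<open>A \<in> Ds\<close> by blast
  next
    assume "A \<notin> Ds" "B \<in> Ds"
    hence "A \<in> F0" using A Fsplit by auto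
    moreover have "R B = A" using e \<open>A \<notin> Ds\<close> \<open>B \<in> Ds\<close> by (simp add: rho_def)
    ultimately show ?thesis using R_F0 \<open>B \<in> Ds\<close> by blast
  next
    assume "A \<notin> Ds" "B \<notin> Ds" thus ?thesis using e by (simp add: rho_def)
  qed
qed

lemma mem_rho: "E \<in> F - {C} \<Longrightarrow> z \<notin> C \<Longrightarrow> lvar z \<noteq> v \<Longrightarrow> z \<in> rho E \<longleftrightarrow> z \<in> E"
  by (auto simp: rho_def R_def)

lemma finG: "finite (DP v F)" using G_eq finF by simp

lemma deg_same: assumes "z \<notin> C" "lvar z \<noteq> v" shows "ldeg (DP v F) z = ldeg F z"
proof -
  have "{E\<in>DP v F. z \<in> E} = rho ` {E\<in>F - {C}. z\<in>E}"
  proof (rule set_eqI, rule iffI)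
    fix E' assume "E' \<in> {E\<in>DP v F. z \<in> E}"
    then obtain E where E: "E \<in> F - {C}" "E' = rho E" "z \<in> rho E" unfolding G_eq by auto
    hence "z \<in> E" using mem_rho[OF E(1) assms] by simp
    thus "E' \<in> rho ` {E\<in>F - {C}. z\<in>E}" using E by blast
  next
    fix E' assume "E' \<in> rho ` {E\<in>F - {C}. z\<in>E}"
    then obtain E where E: "E \<in> F - {C}" "z \<in> E" "E' = rho E" by blast
    thus "E' \<in> {E\<in>DP v F. z \<in> E}" unfolding G_eq using mem_rho[OF E(1) assms] by blast
  qed
  moreover have "{E\<in>F - {C}. z\<in>E} = {E\<in>F. z\<in>E}" using assms(1) by blast
  moreover have "inj_on rho {E\<in>F - {C}. z\<in>E}" by (rule inj_on_subset[OF rho_inj]) blast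
  hence "card (rho ` {E\<in>F - {C}. z\<in>E}) = card {E\<in>F - {C}. z\<in>E}" by (rule card_image)
  ultimately show ?thesis unfolding ldeg_def by simp
qed

lemma deg_C: assumes "z \<in> C" "lvar z \<noteq> v" shows "ldeg (DP v F) z \<ge> 2"
proof -
  have zz: "z \<noteq> x" "z \<noteq> comp x" using assms(2) by auto
  have sub: "rho ` Ds \<subseteq> {E\<in>DP v F. z \<in> E}"
  proof
    fix E' assume "E' \<in> rho ` Ds"
    then obtain D where D: "D \<in> Ds" "E' = rho D" by blast
    have "D \<in> F - {C}" using D(1) Fsplit by blast
    hence "E' \<in> DP v F" using D(2) G_eq by blast
    moreover have "z \<in> E'" using D zz assms(1) by (simp add: rho_def R_def)
    ultimately show "E' \<in> {E\<in>DP v F. z \<in> E}" by blast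
  qed
  have inj: "inj_on rho Ds" by (rule inj_on_subset[OF rho_inj]) (use Fsplit in blast)
  have "card (rho ` Ds) = card Ds" by (rule card_image[OF inj])
  moreover have "finite {E\<in>DP v F. z \<in> E}" using finG by simp
  ultimately have "card Ds \<le> card {E\<in>DP v F. z \<in> E}"
    using sub card_mono by metis
  thus ?thesis using degDs by (simp add: ldeg_def)
qed

lemma deg_v: assumes "lvar z = v" shows "ldeg (DP v F) z = 0"
proof -
  have "z = x \<or> z = comp x" using assms lvar_eq_cases by metis
  hence "{E\<in>DP v F. z \<in> E} = {}" unfolding DP_eq by (auto simp: F0_alt R_def)
  thus ?thesis unfolding ldeg_def by (metis card.empty)
qed

lemma clauseG: "E \<in> DP v F \<Longrightarrow> clause E"
proof -
  assume "E \<in> DP v F"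
  then consider "E \<in> F0" | D where "D \<in> Ds" "E = R D" unfolding DP_eq by blast
  thus "clause E"
  proof cases
    case 1 thus ?thesis using clF by (simp add: F0_alt)
  next
    case 2
    have DF: "D \<in> F" using 2 by (simp add: Ds_def)
    have "finite C" "finite D" using clF[OF CF] clF[OF DF] by (simp_all add: clause_def)
    hence fin: "finite E" using 2 by (simp add: R_def)
    have "comp z \<notin> E" if z: "z \<in> E" for z
    proof
      assume cz: "comp z \<in> E"
      have zn: "z \<noteq> x" "z \<noteq> comp x" using z 2 by (simp_all add: R_def)
      have zz: "z \<in> C \<or> z \<in> D" "comp z \<in> C \<or> comp z \<in> D" using z cz 2 by (simp_all add: R_def)
      have cl: "C \<inter> comp ` D = {x}" using clash 2 by blast
      show False
      proof (cases "z \<in> C")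
        case True
        have "comp z \<notin> C" using cons[OF CF True] .
        hence "comp z \<in> D" using zz(2) by blast
        hence "z \<in> C \<inter> comp ` D" using True by (simp add: mem_comp_img)
        hence "z \<in> {x}" using cl by simp
        thus False using zn by simp
      next
        case False
        hence zD: "z \<in> D" using zz(1) by blast
        have "comp z \<notin> D" using cons[OF DF zD] .
        hence "comp z \<in> C" using zz(2) by blast
        hence "comp z \<in> C \<inter> comp ` D" using zD by (simp add: mem_comp_img)
        hence "comp z \<in> {x}" using cl by simp
        thus False using zn by auto
      qed
    qed
    thus ?thesis using fin by (simp add: clause_def)
  qed
qed

lemma unsatG: "\<not> satisfiable (DP v F)"
proof
  assume "satisfiable (DP v F)"
  then obtain \<phi> where p: "\<forall>E\<in>DP v F. \<exists>z\<in>E. lit_val \<phi> z" by (auto simp: satisfiable_def)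
  show False
  proof (cases "\<forall>D\<in>Ds. \<exists>z\<in>D - {comp x}. lit_val \<phi> z")
    case True
    define \<psi> where "\<psi> = \<phi>(v := lit_val (\<lambda>_. True) x)"
    have px: "lit_val \<psi> x" unfolding \<psi>_def using lit_val_upd_self[of \<phi> x True] by simp
    have oth: "\<And>w. lvar w \<noteq> v \<Longrightarrow> lit_val \<psi> w = lit_val \<phi> w" unfolding \<psi>_def by (rule lit_val_upd_other)
    have "\<forall>E\<in>F. \<exists>w\<in>E. lit_val \<psi> w"
    proof
      fix E assume E: "E \<in> F"
      show "\<exists>w\<in>E. lit_val \<psi> w"
      proof (cases "E = C")
        case True thus ?thesis using px xinC by auto
      next
        case False
        hence "E \<in> F0 \<or> E \<in> Ds" using E Fsplit by auto
        thus ?thesis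
        proof
          assume E0: "E \<in> F0"
          hence "E \<in> DP v F" unfolding DP_eq by blast
          then obtain w where w: "w \<in> E" "lit_val \<phi> w" using p by blast
          have "w \<noteq> x" "w \<noteq> comp x" using w(1) E0 by (auto simp: F0_alt)
          hence "lvar w \<noteq> v" by (rule notv)
          thus ?thesis using w oth by auto
        next
          assume ED: "E \<in> Ds"
          then obtain w where w: "w \<in> E" "w \<noteq> comp x" "lit_val \<phi> w" using True by blast
          have "w \<noteq> x" using cons[OF E] w(1) ED by (auto simp: Ds_def)
          hence "lvar w \<noteq> v" using notv w(2) by auto
          thus ?thesis using w oth by auto
        qed
      qed
    qed
    thus False using unsatF unfolding satisfiable_def by blast
  next
    case False
    then obtain D where D: "D \<in> Ds" "\<forall>z\<in>D - {comp x}. \<not> lit_val \<phi> z" by blast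
    have "R D \<in> DP v F" using D DP_eq by auto
    then obtain z where z: "z \<in> R D" "lit_val \<phi> z" using p by blast
    hence "z \<in> C" "z \<noteq> x" using D(2) by (auto simp: R_def)
    moreover have "\<forall>E\<in>F. E \<noteq> C \<longrightarrow> comp x \<notin> E \<longrightarrow> sat_cl \<phi> E"
    proof (intro ballI impI)
      fix E assume E: "E \<in> F" "E \<noteq> C" "comp x \<notin> E"
      have "x \<notin> E" using x_uniq E(1,2) by blast
      hence "E \<in> F0" using E by (simp add: F0_alt)
      hence "E \<in> DP v F" unfolding DP_eq by blast
      thus "sat_cl \<phi> E" using p by (simp add: sat_cl_def)
    qed
    ultimately show False using flip_sat z(2) by blast
  qed
qed

lemma subG: assumes "G' \<subset> DP v F" shows "satisfiable G'"
proof -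
  obtain E0 where E0: "E0 \<in> DP v F" "E0 \<notin> G'" using assms by blast
  obtain A where A: "A \<in> F - {C}" "E0 = rho A" using E0 G_eq by auto
  obtain \<phi> where p: "\<forall>E\<in>F. E \<noteq> A \<longrightarrow> sat_cl \<phi> E" "\<forall>z\<in>A. \<not> lit_val \<phi> z" using crit A by blast
  have "\<forall>E\<in>DP v F - {E0}. sat_cl \<phi> E"
  proof
    fix E assume E: "E \<in> DP v F - {E0}"
    then obtain B where B: "B \<in> F - {C}" "E = rho B" using G_eq by auto
    have BA: "B \<noteq> A" using B E A by auto
    show "sat_cl \<phi> E"
    proof (cases "B \<in> Ds")
      case False thus ?thesis using B BA p(1) by (simp add: rho_def)
    next
      case True
      have BF: "B \<in> F" and cB: "comp x \<in> B" using True by (auto simp: Ds_def)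
      have sC: "sat_cl \<phi> C" using p(1) CF A by auto
      have sB: "sat_cl \<phi> B" using p(1) BF BA by auto
      show ?thesis
      proof (cases "lit_val \<phi> x")
        case True
        then obtain w where "w \<in> B" "lit_val \<phi> w" using sB by (auto simp: sat_cl_def)
        moreover have "x \<notin> B" using cons[OF BF cB] by simp
        ultimately show ?thesis using \<open>B \<in> Ds\<close> B True by (auto simp: rho_def R_def sat_cl_def)
      next
        case False
        then obtain w where "w \<in> C" "lit_val \<phi> w" using sC by (auto simp: sat_cl_def)
        moreover have "comp x \<notin> C" using cxC .
        ultimately show ?thesis using \<open>B \<in> Ds\<close> B False by (auto simp: rho_def R_def sat_cl_def)
      qed
    qed
  qed
  moreover have "G' \<subseteq> DP v F - {E0}" using assms E0 by auto
  ultimately have "\<forall>E\<in>G'. \<exists>z\<in>E. lit_val \<phi> z" by (auto simp: sat_cl_def)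
  thus ?thesis unfolding satisfiable_def by blast
qed

lemma muG: "min_unsat (DP v F)"
  using finG clauseG unsatG subG by (auto simp: min_unsat_def clause_set_def)

lemma LG: "sing_lits (DP v F) = sing_lits F - C"
proof (rule set_eqI)
  fix y
  show "y \<in> sing_lits (DP v F) \<longleftrightarrow> y \<in> sing_lits F - C"
  proof (cases "lvar y = v")
    case True
    hence "y = x \<or> y = comp x" using lvar_eq_cases by metis
    moreover have "comp x \<notin> sing_lits F" using degDs by (simp add: sing_lits_iff ldeg_def Ds_def)
    ultimately show ?thesis using deg_v[OF True] xinC by (auto simp: sing_lits_iff)
  next
    case False
    hence cv: "lvar (comp y) \<noteq> v" by simp
    show ?thesis
    proof (cases "y \<in> C")
      case True thus ?thesis using deg_C[OF True False] by (auto simp: sing_lits_iff)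
    next
      case yC: False
      have dy: "ldeg (DP v F) y = ldeg F y" using deg_same[OF yC False] .
      have "(ldeg (DP v F) (comp y) \<ge> 1) = (ldeg F (comp y) \<ge> 1)"
      proof (cases "comp y \<in> C")
        case True thus ?thesis using deg_C[OF True cv] ldeg_pos[OF finF CF True] by simp
      next
        case False thus ?thesis using deg_same[OF False cv] by simp
      qed
      thus ?thesis using dy yC by (simp add: sing_lits_iff)
    qed
  qed
qed

lemma no1G: "\<forall>w. \<not> one_singular (DP v F) w"
proof
  fix w
  show "\<not> one_singular (DP v F) w"
  proof
    assume a: "one_singular (DP v F) w"
    have d: "ldeg (DP v F) (Pos w) = 1" "ldeg (DP v F) (comp (Pos w)) = 1"
      using a one_singular_iff[of "DP v F" "Pos w"] by auto
    have wv: "lvar (Pos w) \<noteq> v" using d deg_v by force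
    have n1: "Pos w \<notin> C" using d deg_C wv by force
    have n2: "comp (Pos w) \<notin> C" using d deg_C wv by force
    have "ldeg F (Pos w) = 1" "ldeg F (comp (Pos w)) = 1"
      using d deg_same n1 n2 wv by auto
    hence "one_singular F w" using one_singular_iff[of F "Pos w"] by simp
    thus False using no1 by blast
  qed
qed

lemma togG: assumes "y1 \<in> sing_lits F - C" "y2 \<in> sing_lits F - C"
  shows "tog (DP v F) y1 y2 = tog F y1 y2"
proof -
  have "y1 \<in> sing_lits (DP v F)" "y2 \<in> sing_lits (DP v F)" using assms LG by simp_all
  hence "ldeg (DP v F) y1 = 1" "ldeg (DP v F) y2 = 1" by (simp_all add: sing_lits_iff)
  hence v1: "lvar y1 \<noteq> v" and v2: "lvar y2 \<noteq> v" using deg_v by force+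
  have n1: "y1 \<notin> C" and n2: "y2 \<notin> C" using assms by auto
  show ?thesis
  proof
    assume "tog (DP v F) y1 y2"
    then obtain E where E: "E \<in> F - {C}" "y1 \<in> rho E" "y2 \<in> rho E" unfolding tog_def G_eq by auto
    hence "y1 \<in> E" "y2 \<in> E" using mem_rho[OF E(1) n1 v1] mem_rho[OF E(1) n2 v2] by auto
    thus "tog F y1 y2" using E(1) unfolding tog_def by blast
  next
    assume "tog F y1 y2"
    then obtain E where E: "E \<in> F" "y1 \<in> E" "y2 \<in> E" unfolding tog_def by auto
    hence E': "E \<in> F - {C}" using n1 by auto
    hence "y1 \<in> rho E" "y2 \<in> rho E" using mem_rho[OF E' n1 v1] mem_rho[OF E' n2 v2] E by auto
    moreover have "rho E \<in> DP v F" using E' G_eq by auto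
    ultimately show "tog (DP v F) y1 y2" unfolding tog_def by blast
  qed
qed

end

lemma step:
  assumes "min_unsat F" "\<forall>w. \<not> one_singular F w" "x \<in> sing_lits F" "{E\<in>F. x\<in>E} = {C}"
  shows "min_unsat (DP (lvar x) F)" "\<forall>w. \<not> one_singular (DP (lvar x) F) w"
    "sing_lits (DP (lvar x) F) = sing_lits F - C"
    "\<And>y1 y2. y1 \<in> sing_lits F - C \<Longrightarrow> y2 \<in> sing_lits F - C \<Longrightarrow> tog (DP (lvar x) F) y1 y2 = tog F y1 y2"
proof -
  interpret dpstep F x C using assms by unfold_locales
  show "min_unsat (DP (lvar x) F)" by (rule muG)
  show "\<forall>w. \<not> one_singular (DP (lvar x) F) w" by (rule no1G)
  show "sing_lits (DP (lvar x) F) = sing_lits F - C" by (rule LG)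
  show "\<And>y1 y2. y1 \<in> sing_lits F - C \<Longrightarrow> y2 \<in> sing_lits F - C \<Longrightarrow> tog (DP (lvar x) F) y1 y2 = tog F y1 y2"
    by (rule togG)
qed

lemma st_cons: "singular_tuple F (v # vs) \<longleftrightarrow> singular F v \<and> singular_tuple (DP v F) vs"
  unfolding singular_tuple_def by (simp add: All_less_Suc2)

lemma tog_sym: "tog F a b \<Longrightarrow> tog F b a" unfolding tog_def by blast

lemma tog_L: assumes y: "y \<in> sing_lits F" and t1: "tog F a y" and t2: "tog F b y" shows "tog F a b"
proof -
  obtain E1 where E1: "E1 \<in> F" "a \<in> E1" "y \<in> E1" using t1 unfolding tog_def by blast
  obtain E2 where E2: "E2 \<in> F" "b \<in> E2" "y \<in> E2" using t2 unfolding tog_def by blast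
  have "E1 = E2" using L_uniq[OF y E1(1) E2(1) E1(3) E2(3)] .
  thus ?thesis using E1 E2 unfolding tog_def by blast
qed

lemma main:
  "min_unsat F \<Longrightarrow> \<forall>w. \<not> one_singular F w \<Longrightarrow>
   (singular_tuple F vs \<longleftrightarrow> distinct vs \<and> indep F (set vs)) \<and>
   (singular_tuple F vs \<longrightarrow> (nonsingular (DP_seq vs F) \<longleftrightarrow> cover F (set vs)))"
proof (induction vs arbitrary: F)
  case Nil
  have "nonsingular F \<longleftrightarrow> cover F {}"
    unfolding nonsingular_def cover_def singular_iff_L by blast
  thus ?case by (simp add: singular_tuple_def indep_def)
next
  case (Cons v vs)
  show ?case
  proof (cases "singular F v")
    case False
    thus ?thesis by (simp add: st_cons indep_def)
  next
    case True
    then obtain x where x: "x \<in> sing_lits F" "lvar x = v" by (auto simp: singular_iff_L)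
    then obtain C where xC: "{E\<in>F. x\<in>E} = {C}" using L_clause by blast
    define G where "G = DP v F"
    have G: "min_unsat G" "\<forall>w. \<not> one_singular G w" "sing_lits G = sing_lits F - C"
       "\<And>y1 y2. y1 \<in> sing_lits F - C \<Longrightarrow> y2 \<in> sing_lits F - C \<Longrightarrow> tog G y1 y2 = tog F y1 y2"
      using step[OF Cons.prems x(1) xC] unfolding G_def x(2) by auto
    have IH: "(singular_tuple G vs \<longleftrightarrow> distinct vs \<and> indep G (set vs)) \<and>
       (singular_tuple G vs \<longrightarrow> (nonsingular (DP_seq vs G) \<longleftrightarrow> cover G (set vs)))"
      using Cons.IH[OF G(1,2)] .
    have xE: "\<And>E. (E \<in> F \<and> x \<in> E) \<longleftrightarrow> E = C" using xC by (simp add: set_eq_iff)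
    have tx: "\<And>y. tog F x y \<longleftrightarrow> y \<in> C" unfolding tog_def using xE by blast
    have L1: "\<And>y1 y2. y1 \<in> sing_lits F \<Longrightarrow> y2 \<in> sing_lits F \<Longrightarrow> lvar y1 = lvar y2 \<Longrightarrow> y1 = y2"
      using L_unique[OF Cons.prems(2)] by blast
    have xinC: "x \<in> C" using xE by blast
    have SG: "\<And>w. singular G w \<longleftrightarrow> (\<exists>y\<in>sing_lits F - C. lvar y = w)"
      using singular_iff_L[of G] G(3) by simp
    let ?T = "set vs"
    have I: "indep G ?T \<longleftrightarrow> v \<notin> ?T \<and> indep F (insert v ?T)"
    proof
      assume ind: "indep G ?T"
      have inT: "y \<notin> C" if y: "y \<in> sing_lits F" "lvar y \<in> ?T" for y
      proof -
        have "singular G (lvar y)" using ind y(2) unfolding indep_def by blast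
        then obtain y' where y': "y' \<in> sing_lits F - C" "lvar y' = lvar y" using SG by blast
        hence "y' = y" using L1 y(1) by blast
        thus "y \<notin> C" using y' by blast
      qed
      have vT: "v \<notin> ?T" using inT[OF x(1)] x(2) xinC by blast
      have "insert v ?T \<subseteq> {w. singular F w}"
      proof
        fix w assume "w \<in> insert v ?T"
        thus "w \<in> {w. singular F w}"
        proof
          assume "w = v" thus ?thesis using True by simp
        next
          assume "w \<in> ?T"
          hence "singular G w" using ind unfolding indep_def by blast
          then obtain y where "y \<in> sing_lits F - C" "lvar y = w" using SG by blast
          hence "\<exists>y\<in>sing_lits F. lvar y = w" by blast
          thus ?thesis by (simp add: singular_iff_L)
        qed
      qed
      moreover have "y1 = y2" if y: "y1 \<in> sing_lits F" "y2 \<in> sing_lits F" "lvar y1 \<in> insert v ?T"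
          "lvar y2 \<in> insert v ?T" "tog F y1 y2" for y1 y2
      proof (cases "lvar y1 = v")
        case T1: True
        hence e1: "y1 = x" using L1 y(1) x by metis
        show ?thesis
        proof (cases "lvar y2 = v")
          case True thus ?thesis using e1 L1 y(2) x by metis
        next
          case False
          hence "lvar y2 \<in> ?T" using y(4) by blast
          hence "y2 \<notin> C" using inT y(2) by blast
          moreover have "y2 \<in> C" using tx y(5) e1 by blast
          ultimately show ?thesis by blast
        qed
      next
        case F1: False
        hence t1: "lvar y1 \<in> ?T" using y(3) by blast
        hence n1: "y1 \<notin> C" using inT y(1) by blast
        show ?thesis
        proof (cases "lvar y2 = v")
          case True
          hence "y2 = x" using L1 y(2) x by metis
          hence "tog F x y1" using y(5) tog_sym by metis
          thus ?thesis using tx n1 by blast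
        next
          case False
          hence t2: "lvar y2 \<in> ?T" using y(4) by blast
          hence n2: "y2 \<notin> C" using inT y(2) by blast
          have "tog G y1 y2" using G(4) y(1,2) n1 n2 y(5) by blast
          moreover have "y1 \<in> sing_lits G" "y2 \<in> sing_lits G" using G(3) y(1,2) n1 n2 by blast+
          ultimately show ?thesis using ind t1 t2 unfolding indep_def by blast
        qed
      qed
      ultimately show "v \<notin> ?T \<and> indep F (insert v ?T)" using vT unfolding indep_def by blast
    next
      assume a: "v \<notin> ?T \<and> indep F (insert v ?T)"
      have "?T \<subseteq> {w. singular G w}"
      proof
        fix t assume t: "t \<in> ?T"
        hence "singular F t" using a unfolding indep_def by blast
        then obtain y where y: "y \<in> sing_lits F" "lvar y = t" unfolding singular_iff_L by blast
        have "y \<notin> C"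
        proof
          assume "y \<in> C"
          hence "tog F x y" using tx by blast
          hence "x = y" using a x y t unfolding indep_def by blast
          thus False using t y x(2) a by blast
        qed
        thus "t \<in> {w. singular G w}" using SG y by blast
      qed
      moreover have "y1 = y2" if y: "y1 \<in> sing_lits G" "y2 \<in> sing_lits G" "lvar y1 \<in> ?T"
          "lvar y2 \<in> ?T" "tog G y1 y2" for y1 y2
      proof -
        have "tog F y1 y2" using G(3,4) y by blast
        moreover have "y1 \<in> sing_lits F" "y2 \<in> sing_lits F" using G(3) y(1,2) by blast+
        ultimately show ?thesis using a y(3,4) unfolding indep_def by blast
      qed
      ultimately show "indep G ?T" unfolding indep_def by blast
    qed
    have II: "cover G ?T \<longleftrightarrow> cover F (insert v ?T)"
    proof
      assume c: "cover G ?T"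
      show "cover F (insert v ?T)" unfolding cover_def
      proof
        fix y assume y: "y \<in> sing_lits F"
        show "\<exists>y'\<in>sing_lits F. lvar y' \<in> insert v ?T \<and> tog F y y'"
        proof (cases "y \<in> C")
          case True
          hence "tog F y x" using tx tog_sym by blast
          thus ?thesis using x by blast
        next
          case False
          hence "y \<in> sing_lits G" using G(3) y by blast
          then obtain y' where y': "y' \<in> sing_lits G" "lvar y' \<in> ?T" "tog G y y'"
            using c unfolding cover_def by blast
          have y'F: "y' \<in> sing_lits F - C" using y' G(3) by blast
          hence "tog F y y'" using G(4) y False y'(3) by blast
          thus ?thesis using y' y'F by blast
        qed
      qed
    next
      assume c: "cover F (insert v ?T)"
      show "cover G ?T" unfolding cover_def
      proof
        fix y assume y: "y \<in> sing_lits G"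
        hence yF: "y \<in> sing_lits F" "y \<notin> C" using G(3) by blast+
        then obtain y' where y': "y' \<in> sing_lits F" "lvar y' \<in> insert v ?T" "tog F y y'"
          using c unfolding cover_def by blast
        have nv: "lvar y' \<noteq> v"
        proof
          assume "lvar y' = v"
          hence "y' = x" using L1 y'(1) x by metis
          hence "y \<in> C" using tx y'(3) tog_sym by blast
          thus False using yF by blast
        qed
        have nC: "y' \<notin> C"
        proof
          assume "y' \<in> C"
          hence "tog F x y'" using tx by blast
          hence "tog F x y" using tog_L[OF y'(1)] y'(3) tog_sym by blast
          thus False using tx yF by blast
        qed
        have "tog G y y'" using G(4) yF y'(1) nC y'(3) by blast
        moreover have "y' \<in> sing_lits G" using G(3) y'(1) nC by blast
        ultimately show "\<exists>y'\<in>sing_lits G. lvar y' \<in> ?T \<and> tog G y y'" using y'(2) nv by blast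
      qed
    qed
    have st: "singular_tuple F (v # vs) \<longleftrightarrow> singular_tuple G vs" using st_cons[of F v vs] True unfolding G_def by simp
    have ds: "DP_seq (v # vs) F = DP_seq vs G" by (simp add: G_def)
    show ?thesis
    proof
      show "singular_tuple F (v # vs) \<longleftrightarrow> distinct (v # vs) \<and> indep F (set (v # vs))"
        using st IH I by auto
      show "singular_tuple F (v # vs) \<longrightarrow> (nonsingular (DP_seq (v # vs) F) \<longleftrightarrow> cover F (set (v # vs)))"
        using st IH II ds by auto
    qed
  qed
qed

lemma trans_alt: "transversal (shyp F) T \<longleftrightarrow> T \<subseteq> var_cs F \<and>
   (\<forall>E\<in>F. E \<inter> sing_lits F \<noteq> {} \<longrightarrow> (\<exists>z\<in>E \<inter> sing_lits F. lvar z \<in> T))"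
proof -
  have a: "(\<forall>X\<in>snd (shyp F). T \<inter> X \<noteq> {}) \<longleftrightarrow>
     (\<forall>E\<in>F. E \<inter> sing_lits F \<noteq> {} \<longrightarrow> T \<inter> var_cl (E \<inter> sing_lits F) \<noteq> {})"
    unfolding shyp_def by auto
  have b: "\<And>E. T \<inter> var_cl (E \<inter> sing_lits F) \<noteq> {} \<longleftrightarrow> (\<exists>z\<in>E \<inter> sing_lits F. lvar z \<in> T)"
    unfolding var_cl_def by blast
  have c: "fst (shyp F) = var_cs F" by (simp add: shyp_def)
  show ?thesis unfolding transversal_def c a b ..
qed

lemma hit_cover:
  "(\<forall>E\<in>F. E \<inter> sing_lits F \<noteq> {} \<longrightarrow> (\<exists>z\<in>E \<inter> sing_lits F. lvar z \<in> T)) \<longleftrightarrow> cover F T"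
proof
  assume h: "\<forall>E\<in>F. E \<inter> sing_lits F \<noteq> {} \<longrightarrow> (\<exists>z\<in>E \<inter> sing_lits F. lvar z \<in> T)"
  show "cover F T" unfolding cover_def
  proof
    fix y assume y: "y \<in> sing_lits F"
    then obtain E where E: "E \<in> F" "y \<in> E" using L_in by blast
    then obtain z where z: "z \<in> E \<inter> sing_lits F" "lvar z \<in> T" using h y by blast
    have "tog F y z" using E z unfolding tog_def by blast
    thus "\<exists>y'\<in>sing_lits F. lvar y' \<in> T \<and> tog F y y'" using z by blast
  qed
next
  assume c: "cover F T"
  show "\<forall>E\<in>F. E \<inter> sing_lits F \<noteq> {} \<longrightarrow> (\<exists>z\<in>E \<inter> sing_lits F. lvar z \<in> T)"
  proof (intro ballI impI)
    fix E assume E: "E \<in> F" "E \<inter> sing_lits F \<noteq> {}"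
    then obtain y where y: "y \<in> E" "y \<in> sing_lits F" by blast
    then obtain y' where y': "y' \<in> sing_lits F" "lvar y' \<in> T" "tog F y y'" using c unfolding cover_def by blast
    then obtain E' where E': "E' \<in> F" "y \<in> E'" "y' \<in> E'" unfolding tog_def by blast
    have "E' = E" using L_uniq[OF y(2) E'(1) E(1) E'(2) y(1)] .
    thus "\<exists>z\<in>E \<inter> sing_lits F. lvar z \<in> T" using y' E' by blast
  qed
qed

lemma mintrans_iff:
  assumes no1: "\<forall>w. \<not> one_singular F w"
  shows "T \<in> min_transversals (shyp F) \<longleftrightarrow> indep F T \<and> cover F T"
proof -
  have SVv: "{w. singular F w} \<subseteq> var_cs F"
  proof
    fix w assume "w \<in> {w. singular F w}"
    then obtain y where y: "y \<in> sing_lits F" "lvar y = w" unfolding mem_Collect_eq singular_iff_L by blast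
    then obtain E where "E \<in> F" "y \<in> E" using L_in by blast
    thus "w \<in> var_cs F" using y unfolding var_cs_def var_cl_def by blast
  qed
  let ?H = "\<lambda>T. \<forall>E\<in>F. E \<inter> sing_lits F \<noteq> {} \<longrightarrow> (\<exists>z\<in>E \<inter> sing_lits F. lvar z \<in> T)"
  have tr: "\<And>T. transversal (shyp F) T \<longleftrightarrow> T \<subseteq> var_cs F \<and> ?H T" by (rule trans_alt)
  have hc: "\<And>T. ?H T \<longleftrightarrow> cover F T" by (rule hit_cover)
  have L1: "\<And>y1 y2. y1 \<in> sing_lits F \<Longrightarrow> y2 \<in> sing_lits F \<Longrightarrow> lvar y1 = lvar y2 \<Longrightarrow> y1 = y2"
    using L_unique[OF no1] by blast
  show ?thesis
  proof
    assume m: "T \<in> min_transversals (shyp F)"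
    hence trm: "transversal (shyp F) T" unfolding min_transversals_def by blast
    have tt: "T \<subseteq> var_cs F \<and> ?H T" by (rule tr[THEN iffD1, OF trm])
    have t1: "T \<subseteq> var_cs F" using tt by (rule conjunct1)
    have t2: "?H T" using tt by (rule conjunct2)
    note t = t1 t2
    have mn: "\<And>T'. T' \<subset> T \<Longrightarrow> \<not> transversal (shyp F) T'" using m unfolding min_transversals_def by blast
    have sv: "T \<subseteq> {w. singular F w}"
    proof
      fix t assume tT: "t \<in> T"
      show "t \<in> {w. singular F w}"
      proof (rule ccontr)
        assume ns: "t \<notin> {w. singular F w}"
        have h1: "?H (T - {t})"
        proof (intro ballI impI)
          fix E assume "E \<in> F" "E \<inter> sing_lits F \<noteq> {}"
          then obtain z where z: "z \<in> E \<inter> sing_lits F" "lvar z \<in> T" using t(2) by blast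
          have "singular F (lvar z)" unfolding singular_iff_L using z(1) by blast
          hence "lvar z \<noteq> t" using ns by blast
          thus "\<exists>z\<in>E \<inter> sing_lits F. lvar z \<in> T - {t}" using z by blast
        qed
        have s1: "T - {t} \<subseteq> var_cs F" using t(1) by blast
        from conjI[OF s1 h1] have "transversal (shyp F) (T - {t})" by (rule tr[THEN iffD2])
        moreover have "T - {t} \<subset> T" using tT by blast
        ultimately show False using mn by blast
      qed
    qed
    have ind2: "y1 = y2" if y: "y1 \<in> sing_lits F" "y2 \<in> sing_lits F" "lvar y1 \<in> T" "lvar y2 \<in> T"
       "tog F y1 y2" for y1 y2
    proof (rule ccontr)
      assume ne: "y1 \<noteq> y2"
      hence lne: "lvar y1 \<noteq> lvar y2" using L1 y(1,2) by blast
      obtain E0 where E0: "E0 \<in> F" "y1 \<in> E0" "y2 \<in> E0" using y(5) unfolding tog_def by blast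
      have h1: "?H (T - {lvar y1})"
      proof (intro ballI impI)
        fix E assume E: "E \<in> F" "E \<inter> sing_lits F \<noteq> {}"
        then obtain z where z: "z \<in> E \<inter> sing_lits F" "lvar z \<in> T" using t(2) by blast
        show "\<exists>z\<in>E \<inter> sing_lits F. lvar z \<in> T - {lvar y1}"
        proof (cases "lvar z = lvar y1")
          case False thus ?thesis using z by blast
        next
          case True
          hence "z = y1" using L1 z(1) y(1) by blast
          hence "E = E0" using L_uniq[OF y(1) E(1) E0(1)] z(1) E0(2) by blast
          hence "y2 \<in> E \<inter> sing_lits F" using E0(3) y(2) by blast
          moreover have "lvar y2 \<in> T - {lvar y1}" using y(4) lne by simp
          ultimately show ?thesis by (rule bexI[rotated])
        qed
      qed
      have s1: "T - {lvar y1} \<subseteq> var_cs F" using t(1) by blast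
      from conjI[OF s1 h1] have "transversal (shyp F) (T - {lvar y1})" by (rule tr[THEN iffD2])
      moreover have "T - {lvar y1} \<subset> T" using y(3) by blast
      ultimately show False using mn by blast
    qed
    have "cover F T" using hc[THEN iffD1, OF t(2)] .
    thus "indep F T \<and> cover F T" using sv ind2 unfolding indep_def by blast
  next
    assume a: "indep F T \<and> cover F T"
    have sv: "T \<subseteq> {w. singular F w}" using a unfolding indep_def by blast
    have cv: "cover F T" using a by blast
    have h1: "?H T" using hc[THEN iffD2, OF cv] .
    have s1: "T \<subseteq> var_cs F" using sv SVv by blast
    from conjI[OF s1 h1] have trT: "transversal (shyp F) T" by (rule tr[THEN iffD2])
    have "\<not> transversal (shyp F) T'" if T': "T' \<subset> T" for T'
    proof
      assume "transversal (shyp F) T'"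
      hence "T' \<subseteq> var_cs F \<and> ?H T'" by (rule tr[THEN iffD1])
      hence h: "?H T'" by (rule conjunct2)
      obtain t where tt: "t \<in> T" "t \<notin> T'" using T' by blast
      hence "singular F t" using sv by blast
      then obtain y where y: "y \<in> sing_lits F" "lvar y = t" unfolding singular_iff_L by blast
      then obtain E where E: "E \<in> F" "y \<in> E" using L_in by blast
      then obtain z where z: "z \<in> E \<inter> sing_lits F" "lvar z \<in> T'" using h y(1) by blast
      have "tog F y z" using E z unfolding tog_def by blast
      moreover have "lvar z \<in> T" using z(2) T' by blast
      ultimately have "y = z" using a y(1) z(1) y(2) tt(1) unfolding indep_def by blast
      thus False using z(2) y(2) tt(2) by blast
    qed
    thus "T \<in> min_transversals (shyp F)" using trT unfolding min_transversals_def by blast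
  qed
qed

theorem lemma57:
  fixes F :: "'a lit set set"
  assumes "min_unsat F"
    and "\<forall>v. \<not> one_singular F v"
  shows "{set vs | vs. max_singular_tuple F vs} = min_transversals (shyp F)
       \<and> {vs. max_singular_tuple F vs} = {vs. distinct vs \<and> set vs \<in> min_transversals (shyp F)}"
proof -
  have key: "max_singular_tuple F vs \<longleftrightarrow> distinct vs \<and> set vs \<in> min_transversals (shyp F)" for vs
  proof -
    have m: "(singular_tuple F vs \<longleftrightarrow> distinct vs \<and> indep F (set vs)) \<and>
       (singular_tuple F vs \<longrightarrow> (nonsingular (DP_seq vs F) \<longleftrightarrow> cover F (set vs)))"
      by (rule main[OF assms])
    show ?thesis using m mintrans_iff[OF assms(2), of "set vs"] unfolding max_singular_tuple_def by blast
  qed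
  have fF: "finite F" and fE: "\<forall>E\<in>F. finite E"
    using assms(1) by (auto simp: min_unsat_def clause_set_def clause_def)
  have fin: "finite (var_cs F)" unfolding var_cs_def var_cl_def using fF fE by simp
  have "{set vs |vs. max_singular_tuple F vs} = min_transversals (shyp F)"
  proof (rule set_eqI, rule iffI)
    fix T assume "T \<in> {set vs |vs. max_singular_tuple F vs}"
    thus "T \<in> min_transversals (shyp F)" using key by blast
  next
    fix T assume T: "T \<in> min_transversals (shyp F)"
    hence "T \<subseteq> var_cs F" by (simp add: min_transversals_def transversal_def shyp_def)
    hence "finite T" using fin finite_subset by blast
    then obtain vs where "set vs = T" "distinct vs" using finite_distinct_list by blast
    thus "T \<in> {set vs |vs. max_singular_tuple F vs}" using key T by blast
  qed
  moreover have "{vs. max_singular_tuple F vs} = {vs. distinct vs \<and> set vs \<in> min_transversals (shyp F)}"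
    using key by blast
  ultimately show ?thesis by blast
qed

end
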